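(* Let $p$ be an odd prime and $N=\mathbb Z_{p^2}$. Let $\Phi$ be the unique subgroup of order $p-1$ of the unit group $\mathbb Z_{p^2}^\times$, acting on $(\mathbb Z_{p^2},+)$ by multiplication. Let $M=\{p\}$, so that the orbit $p\Phi = p\mathbb Z_{p^2}\setminus\{0\}$ is the zero multiplier orbit, and let the remaining orbit representatives $R\setminus M$ be the elements of a coset $c+p\mathbb Z_{p^2}$ with $c$ a unit. With multiplication $a*b=0$ if $b\in p\mathbb Z_{p^2}$ and $a*b=a\phi_b$ otherwise (where $b=r_b\phi_b$, $r_b\in R\setminus M$, $\phi_b\in\Phi$), $(N,+,* )$ is a planar nearring and $D(N)=p\mathbb Z_{p^2}$; in particular all distributive elements are zero multipliers.
   Context: A (right) nearring $(N,+,* )$ is a set with a group $(N,+)$, a semigroup $(N,* )$, and right distributivity $(a+b)*c=a*c+b*c$. $N$ is planar if the relation $a\cong b$ ($x*a=x*b$ for all $x$) has at least $3$ classes and for all $a,b,c$ with $a\not\cong b$ the equation $x*a=x*b+c$ has a unique solution. Zero multipliers are the $n$ with $x*n=0$ for all $x$. $D(N)=\{n: n*(a+b)=n*a+n*b\ \forall a,b\}$. *)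

theory Defs
  imports "HOL-Algebra.Group" "HOL-Number_Theory.Cong"
begin

definition nearring :: "'a set \<Rightarrow> ('a \<Rightarrow> 'a \<Rightarrow> 'a) \<Rightarrow> ('a \<Rightarrow> 'a \<Rightarrow> 'a) \<Rightarrow> bool" where
  "nearring N add mul \<longleftrightarrow>
     (\<exists>e. group \<lparr>carrier = N, monoid.mult = add, monoid.one = e\<rparr>) \<and>
     (\<forall>a\<in>N. \<forall>b\<in>N. mul a b \<in> N) \<and>
     (\<forall>a\<in>N. \<forall>b\<in>N. \<forall>c\<in>N. mul (mul a b) c = mul a (mul b c)) \<and>
     (\<forall>a\<in>N. \<forall>b\<in>N. \<forall>c\<in>N. mul (add a b) c = add (mul a c) (mul b c))"

definition nr_equiv :: "'a set \<Rightarrow> ('a \<Rightarrow> 'a \<Rightarrow> 'a) \<Rightarrow> 'a \<Rightarrow> 'a \<Rightarrow> bool" where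
  "nr_equiv N mul a b \<longleftrightarrow> (\<forall>x\<in>N. mul x a = mul x b)"

definition planar_nearring :: "'a set \<Rightarrow> ('a \<Rightarrow> 'a \<Rightarrow> 'a) \<Rightarrow> ('a \<Rightarrow> 'a \<Rightarrow> 'a) \<Rightarrow> bool" where
  "planar_nearring N add mul \<longleftrightarrow>
     nearring N add mul \<and>
     (\<exists>a\<in>N. \<exists>b\<in>N. \<exists>c\<in>N. \<not> nr_equiv N mul a b \<and> \<not> nr_equiv N mul a c \<and> \<not> nr_equiv N mul b c) \<and>
     (\<forall>a\<in>N. \<forall>b\<in>N. \<forall>c\<in>N. \<not> nr_equiv N mul a b \<longrightarrow> (\<exists>!x. x \<in> N \<and> mul x a = add (mul x b) c))"

definition distributive_elems :: "'a set \<Rightarrow> ('a \<Rightarrow> 'a \<Rightarrow> 'a) \<Rightarrow> ('a \<Rightarrow> 'a \<Rightarrow> 'a) \<Rightarrow> 'a set" where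
  "distributive_elems N add mul = {n \<in> N. \<forall>a\<in>N. \<forall>b\<in>N. mul n (add a b) = add (mul n a) (mul n b)}"

definition zero_multipliers :: "'a set \<Rightarrow> ('a \<Rightarrow> 'a \<Rightarrow> 'a) \<Rightarrow> 'a \<Rightarrow> 'a set" where
  "zero_multipliers N mul z = {n \<in> N. \<forall>x\<in>N. mul x n = z}"

text \<open>The concrete construction on Z_{p^2}, represented by {0..<p^2} with arithmetic mod p^2.\<close>

definition zmod_add :: "nat \<Rightarrow> nat \<Rightarrow> nat \<Rightarrow> nat" where
  "zmod_add p a b = (a + b) mod p^2"

definition phi_of :: "nat \<Rightarrow> nat set \<Rightarrow> nat \<Rightarrow> nat \<Rightarrow> nat" where
  "phi_of p \<Phi> c b = (THE \<phi>. \<phi> \<in> \<Phi> \<and>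
      (\<exists>r. r < p^2 \<and> [r = c] (mod p) \<and> b = (r * \<phi>) mod p^2))"

definition planar_mul :: "nat \<Rightarrow> nat set \<Rightarrow> nat \<Rightarrow> nat \<Rightarrow> nat \<Rightarrow> nat" where
  "planar_mul p \<Phi> c a b = (if p dvd b then 0 else (a * phi_of p \<Phi> c b) mod p^2)"

end

theory Submission
  imports Defs "HOL-Algebra.Multiplicative_Group"
begin

lemma pow_p_cong:
  fixes a p :: int
  assumes "[a = 1] (mod p)"
  shows "[a^(nat p) = 1] (mod p^2)"
proof -
  have d1: "p dvd (a - 1)" using assms by (simp add: cong_iff_dvd_diff)
  have "[(\<Sum>i<nat p. a^i) = (\<Sum>i<nat p. 1)] (mod p)"
    by (rule cong_sum) (use assms cong_pow in fastforce)
  then have "[(\<Sum>i<nat p. a^i) = of_nat (nat p)] (mod p)" by simp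
  moreover have "[of_nat (nat p) = (0::int)] (mod p)"
    by (cases "p \<ge> 0") (auto simp: cong_0_iff)
  ultimately have d2: "p dvd (\<Sum>i<nat p. a^i)" using cong_trans cong_0_iff by blast
  have "p^2 dvd (a - 1) * (\<Sum>i<nat p. a^i)"
    using mult_dvd_mono[OF d1 d2] by (simp add: power2_eq_square)
  then show ?thesis by (simp add: power_diff_1_eq[symmetric] cong_iff_dvd_diff)
qed


locale ctx =
  fixes p c :: nat and \<Phi> :: "nat set"
  assumes pr: "prime p" and od: "odd p"
    and sub: "\<Phi> \<subseteq> {0..<p^2}"
    and cop: "\<forall>x\<in>\<Phi>. coprime x p"
    and one: "1 \<in> \<Phi>"
    and clo: "\<forall>x\<in>\<Phi>. \<forall>y\<in>\<Phi>. (x * y) mod p^2 \<in> \<Phi>"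
    and inv: "\<forall>x\<in>\<Phi>. \<exists>y\<in>\<Phi>. (x * y) mod p^2 = 1"
    and crd: "card \<Phi> = p - 1"
    and cm: "c < p^2" and cc: "coprime c p"
begin

lemma p3: "p \<ge> 3"
  using pr od prime_ge_2_nat[OF pr] by (metis dvd_refl even_numeral le_antisym not_less_eq_eq numeral_2_eq_2 numeral_3_eq_3)

lemma p1[simp]: "p \<noteq> Suc 0" "p \<noteq> 0" "0 < p" using p3 by auto

lemma m_gt: "p < p^2" "1 < p^2"
proof -
  have "3*p \<le> p*p" using p3 by simp
  then have "p < p*p" "1 < p*p" using p3 by linarith+
  then show "p < p^2" "1 < p^2" by (simp_all add: power2_eq_square)
qed

lemma m_pos[simp]: "0 < p^2" using m_gt by simp

lemma finPhi: "finite \<Phi>" using sub finite_subset by blast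

lemma Phi_lt: "x \<in> \<Phi> \<Longrightarrow> x < p^2" using sub by auto

definition G where "G = \<lparr>carrier = \<Phi>, monoid.mult = (\<lambda>x y. (x*y) mod p^2), one = 1\<rparr>"

lemma grp: "group G"
proof (rule groupI)
  fix x y z assume "x \<in> carrier G" "y \<in> carrier G" "z \<in> carrier G"
  show "x \<otimes>\<^bsub>G\<^esub> y \<otimes>\<^bsub>G\<^esub> z = x \<otimes>\<^bsub>G\<^esub> (y \<otimes>\<^bsub>G\<^esub> z)"
    by (simp add: G_def mod_mult_left_eq mod_mult_right_eq mult.assoc)
next
  fix x y assume "x \<in> carrier G" "y \<in> carrier G"
  then show "x \<otimes>\<^bsub>G\<^esub> y \<in> carrier G" using clo by (simp add: G_def)
next
  show "\<one>\<^bsub>G\<^esub> \<in> carrier G" using one by (simp add: G_def)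
next
  fix x assume "x \<in> carrier G"
  then show "\<one>\<^bsub>G\<^esub> \<otimes>\<^bsub>G\<^esub> x = x" using Phi_lt by (simp add: G_def)
next
  fix x assume "x \<in> carrier G"
  then obtain y where "y \<in> \<Phi>" "(x*y) mod p^2 = 1" using inv by (auto simp: G_def)
  then show "\<exists>y\<in>carrier G. y \<otimes>\<^bsub>G\<^esub> x = \<one>\<^bsub>G\<^esub>" by (auto simp: G_def mult.commute)
qed

lemma Gpow: "x \<in> \<Phi> \<Longrightarrow> x [^]\<^bsub>G\<^esub> (k::nat) = x^k mod p^2"
proof (induction k)
  case 0 then show ?case using m_gt p3 by (simp add: G_def)
next
  case (Suc k) then show ?case by (simp add: G_def mod_mult_right_eq mult.commute)
qed

lemma pow_pm1: "x \<in> \<Phi> \<Longrightarrow> [x^(p-1) = 1] (mod p^2)"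
proof -
  assume x: "x \<in> \<Phi>"
  have "x [^]\<^bsub>G\<^esub> order G = \<one>\<^bsub>G\<^esub>"
    using group.pow_order_eq_1[OF grp] x by (simp add: G_def)
  then have "x^(p-1) mod p^2 = 1" using Gpow[OF x] crd p3 by (simp add: G_def order_def)
  then show ?thesis using m_gt p3 by (simp add: cong_def)
qed

lemma pmod: "[x mod p^2 = x] (mod p)"
  by (simp add: cong_def mod_mod_cancel)

lemma ndvd: "coprime x p \<Longrightarrow> \<not> p dvd x"
  using pr by (metis coprime_absorb_right coprime_commute not_prime_unit)

lemma ndvd_mult: "\<not> p dvd x \<Longrightarrow> \<not> p dvd y \<Longrightarrow> \<not> p dvd x * y"
  using pr by (simp add: prime_dvd_mult_iff)

lemma cop_of: "\<not> p dvd x \<Longrightarrow> coprime x p"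
  using pr by (simp add: prime_imp_coprime coprime_commute)

lemma L2: assumes x: "x \<in> \<Phi>" and h: "[x = 1] (mod p)" shows "x = 1"
proof -
  have "[int x = 1] (mod int p)" using h cong_int_iff[of x 1 p] by simp
  then have "[int x ^ nat (int p) = 1] (mod (int p)^2)" by (rule pow_p_cong)
  then have "[int (x ^ p) = int 1] (mod int (p^2))" by simp
  then have a: "[x ^ p = 1] (mod p^2)" using cong_int_iff by blast
  have "x ^ p = x * x^(p-1)" using p3 by (metis Suc_diff_1 less_le_trans numeral_3_eq_3 power_Suc zero_less_Suc)
  moreover have "[x * x^(p-1) = x * 1] (mod p^2)" using pow_pm1[OF x] by (rule cong_scalar_left)
  ultimately have "[x = 1] (mod p^2)" using a by (metis cong_sym cong_trans mult_1_right)
  then show ?thesis using Phi_lt[OF x] m_gt cong_less_modulus_unique_nat by blast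
qed

lemma L3: assumes x: "x \<in> \<Phi>" and y: "y \<in> \<Phi>" and h: "[x = y] (mod p)" shows "x = y"
proof -
  obtain y' where y': "y' \<in> \<Phi>" "(y*y') mod p^2 = 1" using inv y by blast
  define z where "z = (x*y') mod p^2"
  have zP: "z \<in> \<Phi>" using clo x y' by (simp add: z_def)
  have "[y*y' = 1] (mod p^2)" using y' m_gt by (simp add: cong_def)
  then have yy: "[y*y' = 1] (mod p)" by (rule cong_dvd_modulus_nat) simp
  have "[z = x*y'] (mod p)" unfolding z_def by (rule pmod)
  also have "[x*y' = y*y'] (mod p)" using h by (rule cong_scalar_right)
  also note yy
  finally have "z = 1" using L2 zP by blast
  then have xy1: "[x*y' = 1] (mod p^2)" by (simp add: z_def cong_def)
  have "[x = x*(y*y')] (mod p^2)" using \<open>[y*y' = 1] (mod p^2)\<close> by (metis cong_scalar_left cong_sym mult_1_right)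
  also have "x*(y*y') = (x*y')*y" by simp
  also have "[(x*y')*y = 1*y] (mod p^2)" using xy1 by (rule cong_scalar_right)
  finally show ?thesis using Phi_lt x y cong_less_modulus_unique_nat by simp
qed

lemma L4: assumes u: "\<not> p dvd u" and b: "\<not> p dvd b" shows "\<exists>x\<in>\<Phi>. [u*x = b] (mod p)"
proof -
  define f where "f x = (u*x) mod p" for x
  have inj: "inj_on f \<Phi>"
  proof (rule inj_onI)
    fix x y assume "x \<in> \<Phi>" "y \<in> \<Phi>" "f x = f y"
    then have "[u*x = u*y] (mod p)" by (simp add: f_def cong_def)
    then have "[x = y] (mod p)" using cong_mult_lcancel_nat cop_of[OF u] by blast
    then show "x = y" using L3 \<open>x \<in> \<Phi>\<close> \<open>y \<in> \<Phi>\<close> by blast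
  qed
  have sub1: "f ` \<Phi> \<subseteq> {1..<p}"
  proof
    fix z assume "z \<in> f ` \<Phi>"
    then obtain x where x: "x \<in> \<Phi>" "z = f x" by blast
    have "\<not> p dvd u*x" using ndvd_mult[OF u ndvd] cop x by blast
    then have "z \<noteq> 0" using x by (simp add: f_def dvd_eq_mod_eq_0)
    moreover have "z < p" using x p3 by (simp add: f_def)
    ultimately show "z \<in> {1..<p}" by simp
  qed
  have "card (f ` \<Phi>) = card {1..<p}" using card_image[OF inj] crd by simp
  then have eq: "f ` \<Phi> = {1..<p}" using card_subset_eq[OF _ sub1] by simp
  have "b mod p \<in> {1..<p}" using b p3 by (simp add: dvd_eq_mod_eq_0)
  then obtain x where "x \<in> \<Phi>" "f x = b mod p" using eq by (metis imageE)
  then show ?thesis by (auto simp: f_def cong_def)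
qed

lemma phi_char: assumes b: "b < p^2" "\<not> p dvd b"
  shows "phi_of p \<Phi> c b \<in> \<Phi> \<and> [c * phi_of p \<Phi> c b = b] (mod p)"
proof -
  obtain f where f: "f \<in> \<Phi>" "[c*f = b] (mod p)" using L4[OF ndvd[OF cc] b(2)] by blast
  obtain f' where f': "f' \<in> \<Phi>" "(f*f') mod p^2 = 1" using inv f by blast
  have ff: "[f*f' = 1] (mod p)"
    by (rule cong_dvd_modulus_nat[of _ _ "p^2"]) (use f' m_gt in \<open>simp_all add: cong_def\<close>)
  have "phi_of p \<Phi> c b = f"
    unfolding phi_of_def
  proof (rule the_equality)
    define r where "r = (b*f') mod p^2"
    have "r < p^2" using m_gt by (simp add: r_def)
    moreover have "[r = c] (mod p)"
    proof -
      have "[r = b*f'] (mod p)" unfolding r_def by (rule pmod)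
      also have "[b*f' = c*f*f'] (mod p)" using f(2) by (metis cong_scalar_right cong_sym)
      also have "c*f*f' = c*(f*f')" by simp
      also have "[c*(f*f') = c*1] (mod p)" using ff by (rule cong_scalar_left)
      finally show ?thesis by simp
    qed
    moreover have "b = (r*f) mod p^2"
    proof -
      have "(r*f) mod p^2 = (b*f'*f) mod p^2" by (simp add: r_def mod_mult_left_eq)
      also have "\<dots> = (b*(f*f')) mod p^2" by (simp add: mult.assoc mult.commute[of f' f])
      also have "\<dots> = (b*((f*f') mod p^2)) mod p^2" by (simp add: mod_mult_right_eq)
      also have "\<dots> = b" using f' b by simp
      finally show ?thesis by simp
    qed
    ultimately show "f \<in> \<Phi> \<and> (\<exists>r<p\<^sup>2. [r = c] (mod p) \<and> b = r * f mod p\<^sup>2)" using f by blast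
  next
    fix g assume "g \<in> \<Phi> \<and> (\<exists>r<p\<^sup>2. [r = c] (mod p) \<and> b = r * g mod p\<^sup>2)"
    then obtain r where g: "g \<in> \<Phi>" "[r = c] (mod p)" "b = r * g mod p\<^sup>2" by blast
    have "[c*g = r*g] (mod p)" using g(2) by (metis cong_scalar_right cong_sym)
    also have "[r*g = b] (mod p)" using g(3) pmod by (metis cong_sym)
    also have "[b = c*f] (mod p)" using f(2) by (rule cong_sym)
    finally have "[g = f] (mod p)" using cong_mult_lcancel_nat cop_of[OF ndvd[OF cc]] by blast
    then show "g = f" using L3 g(1) f(1) by blast
  qed
  then show ?thesis using f by simp
qed

lemma phi_uniq: assumes "b < p^2" "\<not> p dvd b" "f \<in> \<Phi>" "[c*f = b] (mod p)"
  shows "phi_of p \<Phi> c b = f"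
proof -
  have "[c * phi_of p \<Phi> c b = c*f] (mod p)" using phi_char[OF assms(1,2)] assms(4) by (metis cong_sym cong_trans)
  then have "[phi_of p \<Phi> c b = f] (mod p)" using cong_mult_lcancel_nat cop_of[OF ndvd[OF cc]] by blast
  then show ?thesis using L3 phi_char[OF assms(1,2)] assms(3) by blast
qed

definition psi where "psi b = (if p dvd b then 0 else phi_of p \<Phi> c b)"

lemma pm: "planar_mul p \<Phi> c a b = (a * psi b) mod p^2"
  by (simp add: planar_mul_def psi_def)

lemma psi_cong: "b < p^2 \<Longrightarrow> [c * psi b = b] (mod p)"
  using phi_char by (auto simp: psi_def cong_def dvd_eq_mod_eq_0)

lemma psi_unit: "b < p^2 \<Longrightarrow> \<not> p dvd b \<Longrightarrow> psi b \<in> \<Phi>"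
  using phi_char by (auto simp: psi_def)

lemma psi_lt: "b < p^2 \<Longrightarrow> psi b < p^2"
  using psi_unit Phi_lt m_gt by (auto simp: psi_def)

lemma psi_eq_iff: assumes "a < p^2" "b < p^2" shows "psi a = psi b \<longleftrightarrow> [a = b] (mod p)"
proof
  assume "psi a = psi b"
  then show "[a = b] (mod p)" using psi_cong[OF assms(1)] psi_cong[OF assms(2)] by (metis cong_sym cong_trans)
next
  assume h: "[a = b] (mod p)"
  show "psi a = psi b"
  proof (cases "p dvd a")
    case True
    then have "p dvd b" using cong_dvd_iff h by blast
    then show ?thesis using True by (simp add: psi_def)
  next
    case False
    then have nb: "\<not> p dvd b" using cong_dvd_iff h by blast
    have "[c * psi a = b] (mod p)" using psi_cong[OF assms(1)] h by (rule cong_trans)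
    then have "phi_of p \<Phi> c b = psi a" using phi_uniq[OF assms(2) nb psi_unit[OF assms(1) False]] by blast
    then show ?thesis using nb by (simp add: psi_def)
  qed
qed

lemma psi_mul: assumes b: "b < p^2" and d: "d < p^2"
  shows "psi ((b * psi d) mod p^2) = (psi b * psi d) mod p^2"
proof (cases "p dvd d")
  case True then show ?thesis by (simp add: psi_def)
next
  case nd: False
  show ?thesis
  proof (cases "p dvd b")
    case True
    then have "p dvd (b * psi d) mod p^2" by (simp add: dvd_mod)
    then show ?thesis using True by (simp add: psi_def)
  next
    case nb: False
    have ud: "psi d \<in> \<Phi>" "psi b \<in> \<Phi>" using psi_unit nd nb b d by auto
    have ne: "\<not> p dvd (b * psi d) mod p^2"
      using ndvd_mult[OF nb ndvd] ud cop by (metis dvd_mod_iff dvd_power le_add2 numeral_2_eq_2 plus_1_eq_Suc zero_less_Suc nat_neq_iff[of 0] power_one_right dvd_refl dvd_mult_left power2_eq_square)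
    have "phi_of p \<Phi> c ((b * psi d) mod p^2) = (psi b * psi d) mod p^2"
    proof (rule phi_uniq)
      show "(b * psi d) mod p^2 < p^2" using m_gt by simp
      show "\<not> p dvd (b * psi d) mod p^2" by (rule ne)
      show "(psi b * psi d) mod p^2 \<in> \<Phi>" using clo ud by blast
      have "[c * ((psi b * psi d) mod p^2) = c * (psi b * psi d)] (mod p)" using pmod by (rule cong_scalar_left)
      also have "c * (psi b * psi d) = (c * psi b) * psi d" by simp
      also have "[(c * psi b) * psi d = b * psi d] (mod p)" using psi_cong[OF b] by (rule cong_scalar_right)
      also have "[b * psi d = (b * psi d) mod p^2] (mod p)" using pmod by (rule cong_sym)
      finally show "[c * ((psi b * psi d) mod p^2) = (b * psi d) mod p^2] (mod p)" .
    qed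
    then show ?thesis using ne by (simp add: psi_def)
  qed
qed

lemma grpN: "group \<lparr>carrier = {0..<p^2}, monoid.mult = zmod_add p, one = 0\<rparr>"
proof (rule groupI)
  fix x y z :: nat
  show "x \<otimes>\<^bsub>\<lparr>carrier = {0..<p^2}, monoid.mult = zmod_add p, one = 0\<rparr>\<^esub> y \<otimes>\<^bsub>\<lparr>carrier = {0..<p^2}, monoid.mult = zmod_add p, one = 0\<rparr>\<^esub> z =
        x \<otimes>\<^bsub>\<lparr>carrier = {0..<p^2}, monoid.mult = zmod_add p, one = 0\<rparr>\<^esub> (y \<otimes>\<^bsub>\<lparr>carrier = {0..<p^2}, monoid.mult = zmod_add p, one = 0\<rparr>\<^esub> z)"
    by (simp add: zmod_add_def mod_add_left_eq mod_add_right_eq add.assoc)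
next
  fix x assume x: "x \<in> carrier \<lparr>carrier = {0..<p^2}, monoid.mult = zmod_add p, one = 0\<rparr>"
  then show "\<exists>y\<in>carrier \<lparr>carrier = {0..<p^2}, monoid.mult = zmod_add p, one = 0\<rparr>.
     y \<otimes>\<^bsub>\<lparr>carrier = {0..<p^2}, monoid.mult = zmod_add p, one = 0\<rparr>\<^esub> x = \<one>\<^bsub>\<lparr>carrier = {0..<p^2}, monoid.mult = zmod_add p, one = 0\<rparr>\<^esub>"
  proof (cases "x = 0")
    case True then show ?thesis by (auto simp: zmod_add_def intro!: bexI[of _ 0])
  next
    case False then show ?thesis using x by (auto simp: zmod_add_def intro!: bexI[of _ "p^2 - x"])
  qed
qed (auto simp: zmod_add_def)

lemma nre: assumes "a < p^2" "b < p^2" shows "nr_equiv {0..<p^2} (planar_mul p \<Phi> c) a b \<longleftrightarrow> [a = b] (mod p)"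
proof
  assume "nr_equiv {0..<p^2} (planar_mul p \<Phi> c) a b"
  then have "planar_mul p \<Phi> c 1 a = planar_mul p \<Phi> c 1 b" using m_gt by (simp add: nr_equiv_def)
  then have "psi a = psi b" using psi_lt assms by (simp add: pm)
  then show "[a = b] (mod p)" using psi_eq_iff assms by blast
next
  assume "[a = b] (mod p)"
  then have "psi a = psi b" using psi_eq_iff assms by blast
  then show "nr_equiv {0..<p^2} (planar_mul p \<Phi> c) a b" by (simp add: nr_equiv_def pm)
qed

lemma uniq: assumes a: "a < p^2" and b: "b < p^2" and d: "d < p^2" and ne: "\<not> [a = b] (mod p)"
  shows "\<exists>!x. x \<in> {0..<p^2} \<and> planar_mul p \<Phi> c x a = zmod_add p (planar_mul p \<Phi> c x b) d"
proof -
  define u where "u = psi a"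
  define v where "v = psi b"
  have nuv: "\<not> [u = v] (mod p)"
  proof
    assume "[u = v] (mod p)"
    then have "[c*u = c*v] (mod p)" by (rule cong_scalar_left)
    then show False using ne psi_cong[OF a] psi_cong[OF b] unfolding u_def v_def by (metis cong_sym cong_trans)
  qed
  define w where "w = int u - int v"
  have "\<not> int p dvd w" using nuv cong_int_iff[of u v p] by (simp add: w_def cong_iff_dvd_diff)
  then have "coprime w (int p)" using pr by (metis coprime_commute prime_imp_coprime prime_nat_int_transfer)
  then have cw: "coprime w (int (p^2))" by simp
  obtain w' where w': "[w * w' = 1] (mod int (p^2))" using cong_solve_coprime_int[OF cw] by blast
  have equiv: "planar_mul p \<Phi> c x a = zmod_add p (planar_mul p \<Phi> c x b) d \<longleftrightarrow> [int x * w = int d] (mod int (p^2))" for x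
  proof -
    have "planar_mul p \<Phi> c x a = zmod_add p (planar_mul p \<Phi> c x b) d \<longleftrightarrow> [x*u = x*v + d] (mod p^2)"
      by (simp add: pm zmod_add_def cong_def mod_add_left_eq u_def v_def)
    also have "\<dots> \<longleftrightarrow> [int (x*u) = int (x*v + d)] (mod int (p^2))" by (rule cong_int_iff[symmetric])
    also have "\<dots> \<longleftrightarrow> [int x * w = int d] (mod int (p^2))"
      by (simp add: cong_iff_dvd_diff w_def algebra_simps)
    finally show ?thesis .
  qed
  define x0 where "x0 = nat ((int d * w') mod int (p^2))"
  have ix0: "int x0 = (int d * w') mod int (p^2)" unfolding x0_def by simp
  have "(int d * w') mod int (p^2) < int (p^2)" using m_pos by (intro pos_mod_bound) linarith
  then have x0lt: "x0 < p^2" using ix0 by linarith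
  have "[int x0 * w = int d * w' * w] (mod int (p^2))" unfolding ix0 by (simp add: cong_def mod_mult_left_eq)
  also have "int d * w' * w = int d * (w * w')" by simp
  also have "[int d * (w * w') = int d * 1] (mod int (p^2))" using w' by (rule cong_scalar_left)
  finally have x0s: "[int x0 * w = int d] (mod int (p^2))" by simp
  show ?thesis
  proof (rule ex1I[of _ x0])
    show "x0 \<in> {0..<p^2} \<and> planar_mul p \<Phi> c x0 a = zmod_add p (planar_mul p \<Phi> c x0 b) d"
      using x0lt x0s equiv by simp
  next
    fix y assume "y \<in> {0..<p^2} \<and> planar_mul p \<Phi> c y a = zmod_add p (planar_mul p \<Phi> c y b) d"
    then have y: "y < p^2" "[int y * w = int d] (mod int (p^2))" using equiv by auto
    have "[int y * w = int x0 * w] (mod int (p^2))" using y(2) x0s by (metis cong_sym cong_trans)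
    then have "[int y = int x0] (mod int (p^2))" using cong_mult_rcancel[OF cw] by blast
    then have "[y = x0] (mod p^2)" using cong_int_iff by blast
    then show "y = x0" using y(1) x0lt cong_less_modulus_unique_nat by blast
  qed
qed

lemma psi_add: assumes "a < p^2" "b < p^2" shows "[psi ((a+b) mod p^2) = psi a + psi b] (mod p)"
proof -
  have "[c * psi ((a+b) mod p^2) = (a+b) mod p^2] (mod p)" using psi_cong m_pos by simp
  also have "[(a+b) mod p^2 = a + b] (mod p)" by (rule pmod)
  also have "[a + b = c * psi a + c * psi b] (mod p)"
    using psi_cong[OF assms(1)] psi_cong[OF assms(2)] by (metis cong_add cong_sym)
  also have "c * psi a + c * psi b = c * (psi a + psi b)" by (simp add: distrib_left)
  finally show ?thesis using cong_mult_lcancel_nat cop_of[OF ndvd[OF cc]] by blast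
qed

lemma dist_p: assumes n: "p dvd n" and a: "a < p^2" and b: "b < p^2"
  shows "planar_mul p \<Phi> c n (zmod_add p a b) = zmod_add p (planar_mul p \<Phi> c n a) (planar_mul p \<Phi> c n b)"
proof -
  obtain k where k: "n = p * k" using n by blast
  have h: "[psi ((a+b) mod p^2) = psi a + psi b] (mod p)" by (rule psi_add[OF a b])
  have "[p * psi ((a+b) mod p^2) = p * (psi a + psi b)] (mod p*p)"
    using h by (simp add: cong_def mod_mult_mult1)
  then have "[k * (p * psi ((a+b) mod p^2)) = k * (p * (psi a + psi b))] (mod p*p)" by (rule cong_scalar_left)
  then have "[n * psi ((a+b) mod p^2) = n * (psi a + psi b)] (mod p^2)"
    by (simp add: k power2_eq_square ac_simps)
  then show ?thesis
    by (simp add: pm zmod_add_def cong_def mod_add_eq distrib_left)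
qed

lemma dist_np: assumes n: "\<not> p dvd n"
  and D: "\<forall>a\<in>{0..<p^2}. \<forall>b\<in>{0..<p^2}. planar_mul p \<Phi> c n (zmod_add p a b) = zmod_add p (planar_mul p \<Phi> c n a) (planar_mul p \<Phi> c n b)"
  shows False
proof -
  define t where "t = planar_mul p \<Phi> c n 1"
  have ind: "k \<le> p \<Longrightarrow> planar_mul p \<Phi> c n k = (k * t) mod p^2" for k
  proof (induction k)
    case 0 then show ?case by (simp add: pm psi_def)
  next
    case (Suc k)
    have "k < p^2" "Suc k < p^2" using Suc.prems m_gt by auto
    then have "zmod_add p k 1 = Suc k" by (simp add: zmod_add_def)
    then have "planar_mul p \<Phi> c n (Suc k) = zmod_add p (planar_mul p \<Phi> c n k) t"
      using D \<open>k < p^2\<close> m_gt unfolding t_def by (metis atLeastLessThan_iff zero_le)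
    also have "\<dots> = ((k*t) mod p^2 + t) mod p^2" using Suc by (simp add: zmod_add_def)
    also have "\<dots> = (Suc k * t) mod p^2" by (metis mod_add_left_eq add.commute mult_Suc)
    finally show ?case .
  qed
  have "planar_mul p \<Phi> c n p = 0" by (simp add: planar_mul_def)
  then have "(p * t) mod p^2 = 0" using ind[of p] by simp
  then have "p * p dvd p * t" by (simp add: power2_eq_square dvd_eq_mod_eq_0)
  then have "p dvd t" by simp
  moreover have "psi 1 \<in> \<Phi>" using psi_unit m_gt pr by (simp add: prime_nat_iff)
  then have "\<not> p dvd n * psi 1" using ndvd_mult[OF n ndvd] cop by blast
  then have "\<not> p dvd t" unfolding t_def pm by (simp add: dvd_mod_iff)
  ultimately show False by blast
qed

lemma main:
  "planar_nearring {0..<p^2} (zmod_add p) (planar_mul p \<Phi> c)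
    \<and> distributive_elems {0..<p^2} (zmod_add p) (planar_mul p \<Phi> c) = {x \<in> {0..<p^2}. p dvd x}
    \<and> distributive_elems {0..<p^2} (zmod_add p) (planar_mul p \<Phi> c)
        \<subseteq> zero_multipliers {0..<p^2} (planar_mul p \<Phi> c) 0"
proof (intro conjI)
  have nr: "nearring {0..<p^2} (zmod_add p) (planar_mul p \<Phi> c)"
    unfolding nearring_def
  proof (intro conjI ballI)
    show "\<exists>e. group \<lparr>carrier = {0..<p^2}, monoid.mult = zmod_add p, one = e\<rparr>" using grpN by blast
  next
    fix a b assume "a \<in> {0..<p^2}" "b \<in> {0..<p^2}"
    show "planar_mul p \<Phi> c a b \<in> {0..<p^2}" by (simp add: pm)
  next
    fix a b d assume "a \<in> {0..<p^2}" "b \<in> {0..<p^2}" "d \<in> {0..<p^2}"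
    then have "psi ((b * psi d) mod p^2) = (psi b * psi d) mod p^2" using psi_mul by simp
    then show "planar_mul p \<Phi> c (planar_mul p \<Phi> c a b) d = planar_mul p \<Phi> c a (planar_mul p \<Phi> c b d)"
      by (simp add: pm mod_mult_left_eq mod_mult_right_eq mult.assoc)
  next
    fix a b d assume "a \<in> {0..<p^2}" "b \<in> {0..<p^2}" "d \<in> {0..<p^2}"
    show "planar_mul p \<Phi> c (zmod_add p a b) d = zmod_add p (planar_mul p \<Phi> c a d) (planar_mul p \<Phi> c b d)"
      by (simp add: pm zmod_add_def mod_mult_left_eq mod_add_eq distrib_right)
  qed
  have three: "\<exists>a\<in>{0..<p^2}. \<exists>b\<in>{0..<p^2}. \<exists>d\<in>{0..<p^2}. \<not> nr_equiv {0..<p^2} (planar_mul p \<Phi> c) a b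
      \<and> \<not> nr_equiv {0..<p^2} (planar_mul p \<Phi> c) a d \<and> \<not> nr_equiv {0..<p^2} (planar_mul p \<Phi> c) b d"
  proof -
    have "2 < p^2" using m_gt p3 by linarith
    have "\<not> nr_equiv {0..<p^2} (planar_mul p \<Phi> c) 0 1" "\<not> nr_equiv {0..<p^2} (planar_mul p \<Phi> c) 0 2"
      "\<not> nr_equiv {0..<p^2} (planar_mul p \<Phi> c) 1 2"
      using \<open>2 < p^2\<close> p3 by (simp_all add: nre cong_def)
    moreover have "(0::nat) \<in> {0..<p^2}" "(1::nat) \<in> {0..<p^2}" "(2::nat) \<in> {0..<p^2}" using \<open>2 < p^2\<close> by auto
    ultimately show ?thesis by blast
  qed
  show "planar_nearring {0..<p^2} (zmod_add p) (planar_mul p \<Phi> c)"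
    unfolding planar_nearring_def using nr three uniq nre by auto
  show eqD: "distributive_elems {0..<p^2} (zmod_add p) (planar_mul p \<Phi> c) = {x \<in> {0..<p^2}. p dvd x}"
    unfolding distributive_elems_def using dist_p dist_np by auto
  show "distributive_elems {0..<p^2} (zmod_add p) (planar_mul p \<Phi> c) \<subseteq> zero_multipliers {0..<p^2} (planar_mul p \<Phi> c) 0"
    unfolding eqD zero_multipliers_def by (auto simp: planar_mul_def)
qed

end

theorem mainTheorem13:
  fixes p c :: nat and \<Phi> :: "nat set"
  assumes "prime p" and "odd p"
    and "\<Phi> \<subseteq> {0..<p^2}"
    and "\<forall>x\<in>\<Phi>. coprime x p"
    and "1 \<in> \<Phi>"
    and "\<forall>x\<in>\<Phi>. \<forall>y\<in>\<Phi>. (x * y) mod p^2 \<in> \<Phi>"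
    and "\<forall>x\<in>\<Phi>. \<exists>y\<in>\<Phi>. (x * y) mod p^2 = 1"
    and "card \<Phi> = p - 1"
    and "c < p^2" and "coprime c p"
  shows "planar_nearring {0..<p^2} (zmod_add p) (planar_mul p \<Phi> c)
    \<and> distributive_elems {0..<p^2} (zmod_add p) (planar_mul p \<Phi> c) = {x \<in> {0..<p^2}. p dvd x}
    \<and> distributive_elems {0..<p^2} (zmod_add p) (planar_mul p \<Phi> c)
        \<subseteq> zero_multipliers {0..<p^2} (planar_mul p \<Phi> c) 0"
proof -
  interpret ctx p c \<Phi> using assms by unfold_locales
  show ?thesis by (rule main)
qed

end
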